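(* Let $T$ be a finite rooted unweighted tree with root $r_T$, height $h_T$ and $L_T$ leaves, and consider the Hydra game on $T$ played by the algorithm $\mathrm{HERC}$. At any time during the game, define $$\Phi = 4\, h_T\, H(\mathrm{rank}(r_T)) + \sum_{w \in T} \eta(w)\,\mathrm{level}(w).$$ Then at any time, $\Phi = O(h_T \cdot (1+\log L_T))$, i.e., there is an absolute constant $C$ such that $\Phi \le C\, h_T (1+\log L_T)$ for every such tree and at every time of the game.
   Context: Hydra game: it is played on a fixed finite rooted unweighted tree $T$ known in advance. Each node is asleep, alive, or dead. Initially the root $r_T$ is alive and all other nodes are asleep. In each step the adversary picks an alive node $w$, makes it dead, and makes all its children alive (so at all times all ancestors of alive nodes are dead and all descendants of alive nodes are asleep). The game ends when all nodes except one are dead. The algorithm must always be at an alive node; if its node is killed, it moves to an alive node $w'$ paying the tree distance $\mathrm{dist}(w,w')$ (length of the shortest path in $T$). $\mathrm{rank}(u)$ is the number of non-dead (alive or asleep) leaves in the subtree rooted at $u$; $\mathrm{level}(u)$ is the height of the subtree rooted at $u$ (leaves have level $0$, so $h_T=\mathrm{level}(r_T)$). $H(n)=\sum_{i=1}^n 1/i$ is the $n$-th harmonic number. Algorithm $\mathrm{HERC}$ maintains a probability distribution $\eta$ on nodes with $\eta(u)=\mathrm{rank}(u)/\mathrm{rank}(r_T)$ if $u$ is alive and $\eta(u)=0$ otherwise (so initially $\eta$ is $1$ at the root). *)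

theory Defs
  imports "HOL-Analysis.Analysis"
begin

datatype tree = Node "tree list"

fun height :: "tree \<Rightarrow> nat" where
  "height (Node ts) = (if ts = [] then 0 else Suc (Max (set (map height ts))))"

primrec subt :: "tree \<Rightarrow> nat list \<Rightarrow> tree option" where
  "subt t [] = Some t"
| "subt t (i # p) = (case t of Node ts \<Rightarrow> if i < length ts then subt (ts ! i) p else None)"

definition nodes :: "tree \<Rightarrow> nat list set" where
  "nodes T = {p. subt T p \<noteq> None}"

definition children :: "tree \<Rightarrow> nat list \<Rightarrow> nat list set" where
  "children T u = {u @ [i] | i. u @ [i] \<in> nodes T}"

definition leaves :: "tree \<Rightarrow> nat list set" where
  "leaves T = {p. subt T p = Some (Node [])}"

definition level :: "tree \<Rightarrow> nat list \<Rightarrow> nat" where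
  "level T u = height (the (subt T u))"

text \<open>A state is a pair (D, A) of the set of dead nodes and the set of alive nodes;
  all other nodes are asleep.\<close>

inductive reachable :: "tree \<Rightarrow> nat list set \<Rightarrow> nat list set \<Rightarrow> bool" for T where
  init: "reachable T {} {[]}"
| step: "reachable T D A \<Longrightarrow> card (nodes T - D) > 1 \<Longrightarrow> w \<in> A \<Longrightarrow>
         reachable T (insert w D) ((A - {w}) \<union> children T w)"

definition rank :: "tree \<Rightarrow> nat list set \<Rightarrow> nat list \<Rightarrow> nat" where
  "rank T D u = card {l \<in> leaves T. (\<exists>q. l = u @ q) \<and> l \<notin> D}"

text \<open>HERC's distribution eta\<close>
definition eta :: "tree \<Rightarrow> nat list set \<Rightarrow> nat list set \<Rightarrow> nat list \<Rightarrow> real" where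
  "eta T D A u = (if u \<in> A then real (rank T D u) / real (rank T D []) else 0)"

definition Phi :: "tree \<Rightarrow> nat list set \<Rightarrow> nat list set \<Rightarrow> real" where
  "Phi T D A = 4 * real (height T) * harm (rank T D [])
      + (\<Sum>w\<in>nodes T. eta T D A w * real (level T w))"

end

theory Submission
  imports Defs
begin

lemma nodes_Node: "nodes (Node ts) = insert [] (\<Union>i<length ts. (Cons i) ` nodes (ts!i))"
proof -
  have "p \<in> nodes (Node ts) \<longleftrightarrow> p \<in> insert [] (\<Union>i<length ts. (Cons i) ` nodes (ts!i))" for p
    by (cases p) (auto simp: nodes_def)
  then show ?thesis by blast
qed

lemma finite_nodes: "finite (nodes T)"
proof (induction T)
  case (Node ts)
  then show ?case by (simp add: nodes_Node)
qed

lemma height_subt: "subt t p = Some s \<Longrightarrow> height s \<le> height t"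
proof (induction p arbitrary: t s)
  case Nil
  then show ?case by simp
next
  case (Cons i p)
  obtain ts where t: "t = Node ts" by (cases t)
  with Cons.prems have i: "i < length ts" and s: "subt (ts!i) p = Some s"
    by (auto split: if_splits)
  have "height s \<le> height (ts!i)" using Cons.IH s by blast
  also have "height (ts!i) \<le> Max (set (map height ts))"
    using i by (intro Max_ge) auto
  finally show ?case using t i by auto
qed

lemma antichain: "reachable T D A \<Longrightarrow> \<forall>u\<in>A. \<forall>q. u @ q \<in> A \<longrightarrow> q = []"
proof (induction rule: reachable.induct)
  case init
  then show ?case by simp
next
  case (step D A w)
  show ?case
  proof (intro ballI allI impI)
    fix u q assume u: "u \<in> A - {w} \<union> children T w" and uq: "u @ q \<in> A - {w} \<union> children T w"
    show "q = []"
    proof (cases "u \<in> children T w")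
      case True
      then obtain i where ui: "u = w @ [i]" by (auto simp: children_def)
      show ?thesis
      proof (cases "u @ q \<in> children T w")
        case True
        then obtain j where "u @ q = w @ [j]" by (auto simp: children_def)
        then show ?thesis using ui by simp
      next
        case False
        then have "u @ q \<in> A" using uq by auto
        then have "[i] @ q = []" using step.IH step.hyps(3) ui by (metis append.assoc)
        then show ?thesis by simp
      qed
    next
      case False
      then have uA: "u \<in> A" "u \<noteq> w" using u by auto
      show ?thesis
      proof (cases "u @ q \<in> children T w")
        case True
        then obtain j where uj: "u @ q = w @ [j]" by (auto simp: children_def)
        show ?thesis
        proof (cases q rule: rev_cases)
          case Nil then show ?thesis .
        next
          case (snoc q' x)
          then have "w = u @ q'" using uj by simp
          then have "q' = []" using step.IH uA step.hyps(3) by blast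
          then show ?thesis using \<open>w = u @ q'\<close> uA by simp
        qed
      next
        case False
        then show ?thesis using uq step.IH uA by auto
      qed
    qed
  qed
qed

lemma harm_le_ln: "n \<ge> 1 \<Longrightarrow> harm n \<le> 1 + ln (real n)"
proof -
  assume "n \<ge> 1"
  then obtain m where n: "n = Suc m" by (cases n) auto
  have "harm (Suc m) - ln (real (Suc m)) \<le> harm (Suc 0) - ln (real (Suc 0))"
    using decseq_harm_diff_ln unfolding decseq_def by blast
  then show ?thesis using n by (simp add: harm_def)
qed

lemma sum_rank:
  assumes "reachable T D A"
  shows "(\<Sum>w\<in>A \<inter> nodes T. real (rank T D w)) \<le> real (rank T D [])"
proof -
  define S where "S w = {l \<in> leaves T. (\<exists>q. l = w @ q) \<and> l \<notin> D}" for w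
  have finL: "finite (leaves T)"
    using finite_nodes[of T] by (rule finite_subset[rotated]) (auto simp: leaves_def nodes_def)
  have fin: "finite (S w)" for w using finL by (auto simp: S_def)
  have AC: "\<forall>u\<in>A. \<forall>q. u @ q \<in> A \<longrightarrow> q = []" using antichain[OF assms] .
  have disj: "S u \<inter> S v = {}" if "u \<in> A \<inter> nodes T" "v \<in> A \<inter> nodes T" "u \<noteq> v" for u v
  proof (rule ccontr)
    assume "S u \<inter> S v \<noteq> {}"
    then obtain l where "l \<in> S u" "l \<in> S v" by blast
    then obtain q q' where "l = u @ q" "l = v @ q'" by (auto simp: S_def)
    then have "u @ q = v @ q'" by simp
    then obtain r where "u = v @ r \<or> v = u @ r" by (metis append_eq_append_conv2)
    then show False using AC that by auto
  qed
  have "(\<Sum>w\<in>A \<inter> nodes T. real (rank T D w)) = real (\<Sum>w\<in>A \<inter> nodes T. card (S w))"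
    by (simp add: rank_def S_def)
  also have "(\<Sum>w\<in>A \<inter> nodes T. card (S w)) = card (\<Union>w\<in>A \<inter> nodes T. S w)"
    by (rule card_UN_disjoint[symmetric]) (use finite_nodes[of T] fin disj in auto)
  also have "\<dots> \<le> card (S [])"
    by (rule card_mono[OF fin]) (auto simp: S_def)
  finally show ?thesis by (simp add: rank_def S_def)
qed

theorem lemma2:
  "\<exists>C::real. \<forall>T D A. reachable T D A \<longrightarrow>
      Phi T D A \<le> C * real (height T) * (1 + ln (real (card (leaves T))))"
proof (intro exI allI impI)
  fix T D A assume R: "reachable T D A"
  define h where "h = real (height T)"
  define L where "L = card (leaves T)"
  define r where "r = rank T D []"
  have h0: "h \<ge> 0" by (simp add: h_def)
  have lnL: "0 \<le> ln (real L)" by (cases L) auto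
  have finL: "finite (leaves T)"
    using finite_nodes[of T] by (rule finite_subset[rotated]) (auto simp: leaves_def nodes_def)
  have rL: "r \<le> L" unfolding r_def L_def rank_def by (rule card_mono[OF finL]) auto
  have H: "harm r \<le> 1 + ln (real L)"
  proof (cases "r = 0")
    case True then show ?thesis using lnL by (simp add: harm_def)
  next
    case False
    then have "harm r \<le> (harm L :: real)" using rL harm_mono by blast
    also have "\<dots> \<le> 1 + ln (real L)" using False rL by (intro harm_le_ln) auto
    finally show ?thesis .
  qed
  have lev: "real (level T w) \<le> h" if wn: "w \<in> nodes T" for w
  proof -
    obtain s where "subt T w = Some s" using wn unfolding nodes_def by blast
    then show ?thesis using height_subt[of T w s] by (simp add: level_def h_def)
  qed
  have "(\<Sum>w\<in>nodes T. eta T D A w * real (level T w))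
      = (\<Sum>w\<in>A \<inter> nodes T. real (rank T D w) / real r * real (level T w))"
    by (rule sum.mono_neutral_cong_right) (auto simp: finite_nodes eta_def r_def)
  also have "\<dots> \<le> (\<Sum>w\<in>A \<inter> nodes T. real (rank T D w) / real r * h)"
    by (rule sum_mono, rule mult_left_mono) (auto intro: lev)
  also have "\<dots> = (\<Sum>w\<in>A \<inter> nodes T. real (rank T D w)) / real r * h"
    by (simp add: sum_divide_distrib sum_distrib_right)
  also have "\<dots> \<le> h"
  proof (cases "r = 0")
    case True then show ?thesis using h0 by simp
  next
    case False
    have "(\<Sum>w\<in>A \<inter> nodes T. real (rank T D w)) / real r \<le> 1"
      using sum_rank[OF R] False by (simp add: r_def divide_le_eq_1)
    then have "(\<Sum>w\<in>A \<inter> nodes T. real (rank T D w)) / real r * h \<le> 1 * h"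
      using h0 by (rule mult_right_mono)
    then show ?thesis by simp
  qed
  finally have S: "(\<Sum>w\<in>nodes T. eta T D A w * real (level T w)) \<le> h" .
  have "Phi T D A \<le> 4 * h * (1 + ln (real L)) + h"
    unfolding Phi_def using S H h0 mult_left_mono[OF H, of "4*h"]
    by (simp add: h_def r_def)
  also have "\<dots> \<le> 5 * h * (1 + ln (real L))"
    using h0 lnL by (simp add: algebra_simps)
  finally show "Phi T D A \<le> 5 * real (height T) * (1 + ln (real (card (leaves T))))"
    by (simp add: h_def L_def)
qed

end
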